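(* Let $k,s,d$ be positive integers and let $\alpha,\beta\ge0$ be reals. For a sequence $e=(e_1,\dots,e_k)\in[s+1]^k$ define $c(i,j)=|\{\ell\le j: e_\ell=i\}|$ for $i\in[s+1]$, $j\in[k]$, and $$F^*(e)=\sum_{j=1}^k\min\Big\{\big(d-\max_{i\in[s+1]\setminus\{e_j\}}c(i,j)\big)\beta,\ \alpha\Big\}.$$ Then for every $e\in[s+1]^k$ there exists $e'\in[2]^k$ with $F^*(e')\le F^*(e)$ (where $F^*(e')$ is computed by the same formula, viewing $e'$ as an element of $[s+1]^k$).
   Context: $[a]=\{1,\dots,a\}$. *)

theory Defs
  imports Complex_Main
begin

text \<open>Sequences e = (e_1,...,e_k) are represented as functions nat => nat; only the
values at 1..k matter.\<close>

definition cnt :: "(nat \<Rightarrow> nat) \<Rightarrow> nat \<Rightarrow> nat \<Rightarrow> nat" where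
  "cnt e i j = card {l \<in> {1..j}. e l = i}"

definition Fstar :: "nat \<Rightarrow> nat \<Rightarrow> nat \<Rightarrow> real \<Rightarrow> real \<Rightarrow> (nat \<Rightarrow> nat) \<Rightarrow> real" where
  "Fstar k s d \<alpha> \<beta> e =
     (\<Sum>j=1..k. min ((real d - real (Max ((\<lambda>i. cnt e i j) ` ({1..s+1} - {e j})))) * \<beta>) \<alpha>)"

end

theory Submission
  imports Defs
begin

lemma cnt_0: "cnt e i 0 = 0"
  unfolding cnt_def by simp

lemma cnt_Suc: "cnt e i (Suc p) = cnt e i p + (if e (Suc p) = i then 1 else 0)"
proof -
  have "{l \<in> {1..Suc p}. e l = i} = {l \<in> {1..p}. e l = i} \<union> (if e (Suc p) = i then {Suc p} else {})"
    by (auto simp: le_Suc_eq)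
  then show ?thesis unfolding cnt_def by (auto simp: card_insert_if)
qed

lemma cnt_le2: assumes "i \<noteq> v" shows "cnt e i p + cnt e v p \<le> p"
proof -
  have "cnt e i p + cnt e v p = card ({l \<in> {1..p}. e l = i} \<union> {l \<in> {1..p}. e l = v})"
    unfolding cnt_def using assms by (subst card_Un_disjoint) auto
  also have "\<dots> \<le> card {1..p}" by (rule card_mono) auto
  finally show ?thesis by simp
qed

lemma cnt_le: "cnt e i p \<le> p"
proof -
  have "cnt e i p \<le> card {1..p}" unfolding cnt_def by (rule card_mono) auto
  then show ?thesis by simp
qed

definition mx :: "nat \<Rightarrow> (nat \<Rightarrow> nat) \<Rightarrow> nat \<Rightarrow> nat" where
  "mx s e p = Max ((\<lambda>i. cnt e i p) ` {1..s+1})"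

lemma mx_ge: "i \<in> {1..s+1} \<Longrightarrow> cnt e i p \<le> mx s e p"
  unfolding mx_def by (rule Max_ge) auto

lemma mx_0: "mx s e 0 = 0"
  unfolding mx_def cnt_0 by (rule Max_eqI) auto

lemma mx_Suc:
  assumes "e (Suc p) \<in> {1..s+1}"
  shows "mx s e (Suc p) = mx s e p + (if cnt e (e (Suc p)) p = mx s e p then 1 else 0)"
proof -
  let ?v = "e (Suc p)"
  obtain i0 where i0: "i0 \<in> {1..s+1}" "cnt e i0 p = mx s e p"
  proof -
    have "mx s e p \<in> (\<lambda>i. cnt e i p) ` {1..s+1}" unfolding mx_def by (rule Max_in) auto
    then show ?thesis using that by auto
  qed
  show ?thesis
  proof (cases "cnt e ?v p = mx s e p")
    case True
    show ?thesis unfolding mx_def[of s e "Suc p"]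
    proof (rule Max_eqI)
      fix y assume "y \<in> (\<lambda>i. cnt e i (Suc p)) ` {1..s+1}"
      then obtain i where "i \<in> {1..s+1}" "y = cnt e i (Suc p)" by auto
      then show "y \<le> mx s e p + (if cnt e ?v p = mx s e p then 1 else 0)"
        using mx_ge[of i s e p] True by (auto simp: cnt_Suc)
    next
      show "mx s e p + (if cnt e ?v p = mx s e p then 1 else 0) \<in> (\<lambda>i. cnt e i (Suc p)) ` {1..s+1}"
        using True assms by (auto simp: cnt_Suc intro!: image_eqI[of _ _ ?v])
    qed auto
  next
    case False
    have lt: "cnt e ?v p < mx s e p" using False mx_ge[OF assms, of e p] by simp
    show ?thesis unfolding mx_def[of s e "Suc p"]
    proof (rule Max_eqI)
      fix y assume "y \<in> (\<lambda>i. cnt e i (Suc p)) ` {1..s+1}"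
      then obtain i where "i \<in> {1..s+1}" "y = cnt e i (Suc p)" by auto
      then show "y \<le> mx s e p + (if cnt e ?v p = mx s e p then 1 else 0)"
        using mx_ge[of i s e p] False lt by (auto simp: cnt_Suc)
    next
      have "i0 \<noteq> ?v" using i0 False by auto
      then show "mx s e p + (if cnt e ?v p = mx s e p then 1 else 0) \<in> (\<lambda>i. cnt e i (Suc p)) ` {1..s+1}"
        using False i0 by (auto simp: cnt_Suc intro!: image_eqI[of _ _ i0])
    qed auto
  qed
qed

definition ep :: "nat \<Rightarrow> (nat \<Rightarrow> nat) \<Rightarrow> nat \<Rightarrow> nat" where
  "ep s e j = (if cnt e (e j) (j - 1) = mx s e (j - 1) then 1 else 2)"

lemma ep_inv:
  assumes "\<forall>j\<in>{1..k}. e j \<in> {1..s+1}"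
  shows "p \<le> k \<Longrightarrow> cnt (ep s e) 1 p = mx s e p"
proof (induction p)
  case 0
  then show ?case by (simp add: cnt_0 mx_0)
next
  case (Suc p)
  have "e (Suc p) \<in> {1..s+1}" using assms Suc.prems by auto
  then show ?case using Suc by (simp add: cnt_Suc mx_Suc ep_def)
qed

lemma ep_sum: "cnt (ep s e) 1 p + cnt (ep s e) 2 p = p"
proof (induction p)
  case 0
  then show ?case by (simp add: cnt_0)
next
  case (Suc p)
  then show ?case by (simp add: cnt_Suc ep_def)
qed

lemma ne_setI: "x \<in> A \<Longrightarrow> A \<noteq> {}" by auto

theorem lemma1:
  fixes k s d :: nat and \<alpha> \<beta> :: real and e :: "nat \<Rightarrow> nat"
  assumes "k > 0" "s > 0" "d > 0" "\<alpha> \<ge> 0" "\<beta> \<ge> 0"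
    and "\<forall>j\<in>{1..k}. e j \<in> {1..s+1}"
  shows "\<exists>e'. (\<forall>j\<in>{1..k}. e' j \<in> {1..2}) \<and> Fstar k s d \<alpha> \<beta> e' \<le> Fstar k s d \<alpha> \<beta> e"
proof (intro exI conjI)
  let ?e' = "ep s e"
  show "\<forall>j\<in>{1..k}. ?e' j \<in> {1..2}" by (simp add: ep_def)
  have key: "Max ((\<lambda>i. cnt e i j) ` ({1..s+1} - {e j}))
           \<le> Max ((\<lambda>i. cnt ?e' i j) ` ({1..s+1} - {?e' j}))" if j: "j \<in> {1..k}" for j
  proof -
    obtain p where p: "j = Suc p" using j by (cases j) auto
    have pk: "p \<le> k" using j p by auto
    have v: "e j \<in> {1..s+1}" using assms(6) j by auto
    have inv1: "cnt ?e' 1 p = mx s e p" by (rule ep_inv[OF assms(6) pk])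
    have inv2: "cnt ?e' 2 p = p - mx s e p" using ep_sum[of s e p] inv1 by simp
    have fin: "finite ((\<lambda>i. cnt ?e' i j) ` ({1..s+1} - {?e' j}))" by auto
    obtain b where b: "b \<in> {1,2} - {?e' j}" "\<forall>i\<in>{1..s+1} - {e j}. cnt e i j \<le> cnt ?e' b j"
    proof (cases "cnt e (e j) p = mx s e p")
      case True
      then have e1: "?e' j = 1" using p by (simp add: ep_def)
      have "\<forall>i\<in>{1..s+1} - {e j}. cnt e i j \<le> cnt ?e' 2 j"
      proof
        fix i assume i: "i \<in> {1..s+1} - {e j}"
        have "cnt e i j = cnt e i p" using i p by (simp add: cnt_Suc)
        moreover have "cnt e i p + cnt e (e j) p \<le> p" using i by (intro cnt_le2) auto
        moreover have "cnt ?e' 2 j = cnt ?e' 2 p" using p e1 by (simp add: cnt_Suc)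
        ultimately show "cnt e i j \<le> cnt ?e' 2 j" using True inv2 by simp
      qed
      then show ?thesis using that[of 2] e1 by auto
    next
      case False
      then have e2: "?e' j = 2" using p by (simp add: ep_def)
      have "\<forall>i\<in>{1..s+1} - {e j}. cnt e i j \<le> cnt ?e' 1 j"
      proof
        fix i assume i: "i \<in> {1..s+1} - {e j}"
        have "cnt e i j = cnt e i p" using i p by (simp add: cnt_Suc)
        moreover have "cnt e i p \<le> mx s e p" using i by (intro mx_ge) auto
        moreover have "cnt ?e' 1 j = cnt ?e' 1 p" using p e2 by (simp add: cnt_Suc)
        ultimately show "cnt e i j \<le> cnt ?e' 1 j" using inv1 by simp
      qed
      then show ?thesis using that[of 1] e2 by auto
    qed
    have bin: "cnt ?e' b j \<in> (\<lambda>i. cnt ?e' i j) ` ({1..s+1} - {?e' j})"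
      using b(1) assms(2) by auto
    have "cnt ?e' b j \<le> Max ((\<lambda>i. cnt ?e' i j) ` ({1..s+1} - {?e' j}))"
      using fin bin by (rule Max_ge)
    moreover have ne: "{1..s+1} - {e j} \<noteq> {}"
    proof -
      have "(if e j = 1 then 2 else 1) \<in> {1..s+1} - {e j}" using assms(2) by auto
      then show ?thesis by (rule ne_setI)
    qed
    have "Max ((\<lambda>i. cnt e i j) ` ({1..s+1} - {e j})) \<le> cnt ?e' b j"
      using b(2) ne by (subst Max_le_iff) auto
    ultimately show ?thesis by simp
  qed
  show "Fstar k s d \<alpha> \<beta> ?e' \<le> Fstar k s d \<alpha> \<beta> e"
    unfolding Fstar_def
  proof (rule sum_mono)
    fix j assume j: "j \<in> {1..k}"
    have "(real d - real (Max ((\<lambda>i. cnt ?e' i j) ` ({1..s+1} - {?e' j})))) * \<beta>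
        \<le> (real d - real (Max ((\<lambda>i. cnt e i j) ` ({1..s+1} - {e j})))) * \<beta>"
      using key[OF j] assms(5) by (intro mult_right_mono) auto
    then show "min ((real d - real (Max ((\<lambda>i. cnt ?e' i j) ` ({1..s+1} - {?e' j})))) * \<beta>) \<alpha>
        \<le> min ((real d - real (Max ((\<lambda>i. cnt e i j) ` ({1..s+1} - {e j})))) * \<beta>) \<alpha>"
      by (rule min.mono) simp
  qed
qed

end
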